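(* Consider the alternating procedure defined in the context, run for $T_r$ rounds. Then: (i) For every round $1 \le r < T_r$, $$R_{\hat{\boldsymbol{e}}^{(r+1)}}\big(\theta^{(r+1)}, \boldsymbol{\phi}^{(r+1)}\big) \le R_{\hat{\boldsymbol{e}}^{(r)}}\big(\theta^{(r)}, \boldsymbol{\phi}^{(r)}\big).$$ (ii) Suppose in addition that for every assignment $\hat{\boldsymbol{e}} \in [M]^N$ the set $\arg\min_{\theta, \boldsymbol{\phi}} R_{\hat{\boldsymbol{e}}}(\theta, \boldsymbol{\phi})$ is finite. Then there exists a constant $C > 0$ (depending only on the data $x^1,\dots,x^N$, on $h$, $\Omega$, $\lambda$, $M$, $N$, and not on $r$) such that for every round $r$ with $1 < r < T_r$, if $$R_{\hat{\boldsymbol{e}}^{(r+1)}}\big(\theta^{(r+1)}, \boldsymbol{\phi}^{(r+1)}\big) < R_{\hat{\boldsymbol{e}}^{(r)}}\big(\theta^{(r)}, \boldsymbol{\phi}^{(r)}\big),$$ then $$R_{\hat{\boldsymbol{e}}^{(r+1)}}\big(\theta^{(r+1)}, \boldsymbol{\phi}^{(r+1)}\big) \le R_{\hat{\boldsymbol{e}}^{(r)}}\big(\theta^{(r)}, \boldsymbol{\phi}^{(r)}\big) - C.$$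
   Context: Setting. Let $I=[0,T]$ be a time interval and let $x^1,\dots,x^N$ be $N$ differentiable trajectories $x^i : I \to \mathcal{A}$ (state space $\mathcal{A}$ a subset of $\mathbb{R}^d$ or a space of vector fields on a bounded spatial domain). Fix an integer $M \ge 1$ (number of assumed environments), write $[M]=\{1,\dots,M\}$. A parameterized model $h(x;\theta,\phi)$ maps a state $x$, a global parameter $\theta$ and an environment-specific parameter $\phi$ to a tangent vector; $\boldsymbol{\phi}=\{\phi_e\}_{e\in[M]}$ denotes a family of environment-specific parameters. Let $\Omega$ be a real-valued regularizer on environment-specific parameters and $\lambda \ge 0$. Per-trajectory loss: for $i\in[N]$, $e\in[M]$, $$L_i(\theta,\phi_e) = \int_{I} \Big\| \frac{dx^i_t}{dt} - h(x^i_t;\theta,\phi_e)\Big\|_2^2\,dt,$$ assumed finite for all parameters. Objective: for an environment assignment $\hat{\boldsymbol{e}} = (\hat e_1,\dots,\hat e_N) \in [M]^N$, $$R_{\hat{\boldsymbol{e}}}(\theta,\boldsymbol{\phi}) = \sum_{i=1}^N L_i(\theta,\phi_{\hat e_i}) + \lambda \sum_{e=1}^M \Omega(\phi_e).$$ It is assumed that for every $\hat{\boldsymbol{e}}\in[M]^N$ the minimum of $R_{\hat{\boldsymbol{e}}}$ over $(\theta,\boldsymbol{\phi})$ is attained. Algorithm (alternating optimization). Start from arbitrary initial parameters $\theta^{(0)},\boldsymbol{\phi}^{(0)}$ and an arbitrary $\hat{\boldsymbol{e}}^{(0)}\in[M]^N$. For rounds $r=1,2,\dots,T_r$: 1. Assignment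 step: for each $i\in[N]$, choose $\hat e_i^{(r)} \in \arg\min_{e\in[M]} L_i\big(\theta^{(r-1)},\phi_e^{(r-1)}\big)$, with the tie-breaking rule that if $\hat e_i^{(r-1)}$ belongs to this argmin set then $\hat e_i^{(r)} = \hat e_i^{(r-1)}$. 2. Parameter step: choose $(\theta^{(r)},\boldsymbol{\phi}^{(r)}) \in \arg\min_{\theta,\boldsymbol{\phi}} R_{\hat{\boldsymbol{e}}^{(r)}}(\theta,\boldsymbol{\phi})$ (an exact global minimizer; any one if several). *)

theory Defs
  imports "HOL-Analysis.Analysis"
begin

definition traj_loss ::
  "real \<Rightarrow> (real \<Rightarrow> 'a::real_normed_vector) \<Rightarrow> ('a \<Rightarrow> 'p \<Rightarrow> 'q \<Rightarrow> 'a) \<Rightarrow> 'p \<Rightarrow> 'q \<Rightarrow> real"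
  where "traj_loss T x h \<theta> \<phi> =
    integral {0..T} (\<lambda>t. (norm (vector_derivative x (at t within {0..T}) - h (x t) \<theta> \<phi>))\<^sup>2)"

definition objective ::
  "real \<Rightarrow> nat \<Rightarrow> nat \<Rightarrow> (nat \<Rightarrow> real \<Rightarrow> 'a::real_normed_vector) \<Rightarrow> ('a \<Rightarrow> 'p \<Rightarrow> 'q \<Rightarrow> 'a)
     \<Rightarrow> ('q \<Rightarrow> real) \<Rightarrow> real \<Rightarrow> (nat \<Rightarrow> nat) \<Rightarrow> 'p \<Rightarrow> (nat \<Rightarrow> 'q) \<Rightarrow> real"
  where "objective T N M x h \<Omega> lam e \<theta> \<phi> =
    (\<Sum>i=1..N. traj_loss T (x i) h \<theta> (\<phi> (e i))) + lam * (\<Sum>k=1..M. \<Omega> (\<phi> k))"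

definition param_space :: "nat \<Rightarrow> ('p \<times> (nat \<Rightarrow> 'q)) set"
  where "param_space M = {(\<theta>, \<phi>). \<phi> \<in> extensional {1..M}}"

definition argmin_R ::
  "real \<Rightarrow> nat \<Rightarrow> nat \<Rightarrow> (nat \<Rightarrow> real \<Rightarrow> 'a::real_normed_vector) \<Rightarrow> ('a \<Rightarrow> 'p \<Rightarrow> 'q \<Rightarrow> 'a)
     \<Rightarrow> ('q \<Rightarrow> real) \<Rightarrow> real \<Rightarrow> (nat \<Rightarrow> nat) \<Rightarrow> ('p \<times> (nat \<Rightarrow> 'q)) set"
  where "argmin_R T N M x h \<Omega> lam e =
    {p \<in> param_space M. \<forall>q \<in> param_space M.
       objective T N M x h \<Omega> lam e (fst p) (snd p) \<le> objective T N M x h \<Omega> lam e (fst q) (snd q)}"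

text \<open>A run of the alternating optimisation for Tr rounds:
  th r, ph r, es r are theta^(r), phi^(r), e-hat^(r) for r = 0..Tr.\<close>
definition alt_run ::
  "real \<Rightarrow> nat \<Rightarrow> nat \<Rightarrow> (nat \<Rightarrow> real \<Rightarrow> 'a::real_normed_vector) \<Rightarrow> ('a \<Rightarrow> 'p \<Rightarrow> 'q \<Rightarrow> 'a)
     \<Rightarrow> ('q \<Rightarrow> real) \<Rightarrow> real \<Rightarrow> nat
     \<Rightarrow> (nat \<Rightarrow> 'p) \<Rightarrow> (nat \<Rightarrow> nat \<Rightarrow> 'q) \<Rightarrow> (nat \<Rightarrow> nat \<Rightarrow> nat) \<Rightarrow> bool"
  where "alt_run T N M x h \<Omega> lam Tr th ph es \<longleftrightarrow>
    (\<forall>i\<in>{1..N}. es 0 i \<in> {1..M}) \<and>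
    (\<forall>r\<in>{1..Tr}. \<forall>i\<in>{1..N}.
        es r i \<in> {1..M} \<and>
        (\<forall>k\<in>{1..M}. traj_loss T (x i) h (th (r-1)) (ph (r-1) (es r i))
                      \<le> traj_loss T (x i) h (th (r-1)) (ph (r-1) k)) \<and>
        ((\<forall>k\<in>{1..M}. traj_loss T (x i) h (th (r-1)) (ph (r-1) (es (r-1) i))
                      \<le> traj_loss T (x i) h (th (r-1)) (ph (r-1) k))
           \<longrightarrow> es r i = es (r-1) i)) \<and>
    (\<forall>r\<in>{1..Tr}. (th r, ph r) \<in> argmin_R T N M x h \<Omega> lam (es r))"

end

theory Submission
  imports Defs
begin

lemma obj_restrict:
  "objective T N M x h \<Omega> lam (restrict e {1..N}) = objective T N M x h \<Omega> lam e"
  unfolding objective_def by (intro ext) (auto intro!: sum.cong)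

lemma argmin_restrict:
  "argmin_R T N M x h \<Omega> lam (restrict e {1..N}) = argmin_R T N M x h \<Omega> lam e"
  unfolding argmin_R_def obj_restrict ..

lemma argmin_val_finite:
  "finite ((\<lambda>p. objective T N M x h \<Omega> lam e (fst p) (snd p)) ` argmin_R T N M x h \<Omega> lam e)"
proof (cases "argmin_R T N M x h \<Omega> lam e = {}")
  case True then show ?thesis by simp
next
  case False
  then obtain p0 where p0: "p0 \<in> argmin_R T N M x h \<Omega> lam e" by blast
  have "(\<lambda>p. objective T N M x h \<Omega> lam e (fst p) (snd p)) ` argmin_R T N M x h \<Omega> lam e
        \<subseteq> {objective T N M x h \<Omega> lam e (fst p0) (snd p0)}"
  proof
    fix v assume "v \<in> (\<lambda>p. objective T N M x h \<Omega> lam e (fst p) (snd p)) ` argmin_R T N M x h \<Omega> lam e"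
    then obtain p where p: "p \<in> argmin_R T N M x h \<Omega> lam e"
      and v: "v = objective T N M x h \<Omega> lam e (fst p) (snd p)" by blast
    from p p0 have "objective T N M x h \<Omega> lam e (fst p) (snd p) \<le> objective T N M x h \<Omega> lam e (fst p0) (snd p0)"
      and "objective T N M x h \<Omega> lam e (fst p0) (snd p0) \<le> objective T N M x h \<Omega> lam e (fst p) (snd p)"
      unfolding argmin_R_def by auto
    then show "v \<in> {objective T N M x h \<Omega> lam e (fst p0) (snd p0)}" using v by simp
  qed
  then show ?thesis using finite_subset by blast
qed

theorem proposition1:
  fixes T :: real and N M :: nat
    and x :: "nat \<Rightarrow> real \<Rightarrow> 'a::real_inner"
    and h :: "'a \<Rightarrow> 'p \<Rightarrow> 'q \<Rightarrow> 'a"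
    and \<Omega> :: "'q \<Rightarrow> real" and lam :: real
  assumes "T > 0" and "N \<ge> 1" and "M \<ge> 1" and "lam \<ge> 0"
    and diff: "\<forall>i\<in>{1..N}. \<forall>t\<in>{0..T}. x i differentiable (at t within {0..T})"
    and finite_loss: "\<forall>i\<in>{1..N}. \<forall>\<theta> \<phi>.
        (\<lambda>t. (norm (vector_derivative (x i) (at t within {0..T}) - h (x i t) \<theta> \<phi>))\<^sup>2)
          integrable_on {0..T}"
    and attained: "\<forall>e\<in>{1..N} \<rightarrow> {1..M}. argmin_R T N M x h \<Omega> lam e \<noteq> {}"
  shows
    "(\<forall>Tr th ph es. alt_run T N M x h \<Omega> lam Tr th ph es \<longrightarrow>
        (\<forall>r. 1 \<le> r \<and> r < Tr \<longrightarrow>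
           objective T N M x h \<Omega> lam (es (r+1)) (th (r+1)) (ph (r+1))
             \<le> objective T N M x h \<Omega> lam (es r) (th r) (ph r)))
     \<and>
     ((\<forall>e\<in>{1..N} \<rightarrow> {1..M}. finite (argmin_R T N M x h \<Omega> lam e)) \<longrightarrow>
      (\<exists>C>0. \<forall>Tr th ph es. alt_run T N M x h \<Omega> lam Tr th ph es \<longrightarrow>
        (\<forall>r. 1 < r \<and> r < Tr \<and>
           objective T N M x h \<Omega> lam (es (r+1)) (th (r+1)) (ph (r+1))
             < objective T N M x h \<Omega> lam (es r) (th r) (ph r) \<longrightarrow>
           objective T N M x h \<Omega> lam (es (r+1)) (th (r+1)) (ph (r+1))
             \<le> objective T N M x h \<Omega> lam (es r) (th r) (ph r) - C)))"
proof -
  let ?O = "objective T N M x h \<Omega> lam"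
  let ?A = "argmin_R T N M x h \<Omega> lam"
  have part1: "?O (es (r+1)) (th (r+1)) (ph (r+1)) \<le> ?O (es r) (th r) (ph r)"
    if run: "alt_run T N M x h \<Omega> lam Tr th ph es" and r: "1 \<le> r" "r < Tr" for Tr th ph es r
  proof -
    have rr: "r \<in> {1..Tr}" "r+1 \<in> {1..Tr}" using r by auto
    have m1: "(th (r+1), ph (r+1)) \<in> ?A (es (r+1))" using run rr unfolding alt_run_def by blast
    have m0: "(th r, ph r) \<in> ?A (es r)" using run rr unfolding alt_run_def by blast
    hence ps: "(th r, ph r) \<in> param_space M" unfolding argmin_R_def by auto
    have a: "?O (es (r+1)) (th (r+1)) (ph (r+1)) \<le> ?O (es (r+1)) (th r) (ph r)"
      using m1 ps unfolding argmin_R_def by fastforce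
    have "traj_loss T (x i) h (th r) (ph r (es (r+1) i)) \<le> traj_loss T (x i) h (th r) (ph r (es r i))"
      if i: "i \<in> {1..N}" for i
    proof -
      have "es r i \<in> {1..M}" using run rr(1) i unfolding alt_run_def by blast
      moreover have "\<forall>k\<in>{1..M}. traj_loss T (x i) h (th (r+1-1)) (ph (r+1-1) (es (r+1) i))
                      \<le> traj_loss T (x i) h (th (r+1-1)) (ph (r+1-1) k)"
        using run rr(2) i unfolding alt_run_def by blast
      ultimately show ?thesis by simp
    qed
    hence b: "?O (es (r+1)) (th r) (ph r) \<le> ?O (es r) (th r) (ph r)"
      unfolding objective_def by (intro add_right_mono sum_mono) auto
    show ?thesis using a b by linarith
  qed
  define V where "V = (\<Union>e\<in>PiE {1..N} (\<lambda>_. {1..M::nat}). (\<lambda>p. ?O e (fst p) (snd p)) ` ?A e)"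
  have finV: "finite V" unfolding V_def
    by (intro finite_UN_I finite_PiE) (auto simp: argmin_val_finite)
  have inV: "?O (es r) (th r) (ph r) \<in> V"
    if run: "alt_run T N M x h \<Omega> lam Tr th ph es" and r: "1 \<le> r" "r \<le> Tr" for Tr th ph es r
  proof -
    have rr: "r \<in> {1..Tr}" using r by auto
    have m0: "(th r, ph r) \<in> ?A (es r)" using run rr unfolding alt_run_def by blast
    have es: "\<forall>i\<in>{1..N}. es r i \<in> {1..M}" using run rr unfolding alt_run_def by blast
    let ?e = "restrict (es r) {1..N}"
    have "?e \<in> PiE {1..N} (\<lambda>_. {1..M})" using es by auto
    moreover have "(th r, ph r) \<in> ?A ?e" using m0 argmin_restrict[of T N M x h \<Omega> lam "es r"] by argo
    moreover have "?O (es r) (th r) (ph r) = ?O ?e (th r) (ph r)" by (rule fun_cong[OF fun_cong[OF obj_restrict[symmetric]]])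
    ultimately show ?thesis unfolding V_def by force
  qed
  define D where "D = {a - b | a b. a \<in> V \<and> b \<in> V \<and> b < a}"
  have finD: "finite D"
  proof -
    have "D \<subseteq> (\<lambda>(a,b). a - b) ` (V \<times> V)" unfolding D_def by auto
    thus ?thesis using finV finite_subset by blast
  qed
  define C where "C = (if D = {} then 1 else Min D)"
  have Cpos: "C > 0"
  proof (cases "D = {}")
    case True thus ?thesis unfolding C_def by simp
  next
    case False
    have "Min D \<in> D" using False finD by simp
    thus ?thesis unfolding C_def D_def using False by auto
  qed
  have Cle: "C \<le> d" if "d \<in> D" for d
    using that finD unfolding C_def by auto
  have part2: "?O (es (r+1)) (th (r+1)) (ph (r+1)) \<le> ?O (es r) (th r) (ph r) - C"
    if run: "alt_run T N M x h \<Omega> lam Tr th ph es" and r: "1 < r" "r < Tr"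
      and lt: "?O (es (r+1)) (th (r+1)) (ph (r+1)) < ?O (es r) (th r) (ph r)" for Tr th ph es r
  proof -
    have "?O (es (r+1)) (th (r+1)) (ph (r+1)) \<in> V" using inV[OF run, of "r+1"] r by simp
    moreover have "?O (es r) (th r) (ph r) \<in> V" using inV[OF run, of r] r by simp
    ultimately have "?O (es r) (th r) (ph r) - ?O (es (r+1)) (th (r+1)) (ph (r+1)) \<in> D"
      using lt unfolding D_def by blast
    thus ?thesis using Cle by fastforce
  qed
  show ?thesis using part1 part2 Cpos by blast
qed

end
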